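(* Let $(X,\mathcal{M})$ be a measurable space, $\Sigma$ a compact Hausdorff group with Haar probability measure $\mu_\Sigma$ acting measurably on $X$ via $T_\sigma$, and let $\Gamma\subset\mathcal{M}_b(X)$ satisfy $S_\Sigma[\Gamma]\subset\Gamma$. Then for all $P,Q\in\mathcal{P}(X)$ (not necessarily $\Sigma$-invariant), $D_f^{\Gamma^{\mathrm{inv}}_\Sigma}(Q\|P)=D_f^\Gamma(S^\Sigma[Q]\|S^\Sigma[P])$ and $W^{\Gamma^{\mathrm{inv}}_\Sigma}(Q,P)=W^\Gamma(S^\Sigma[Q],S^\Sigma[P])$.
   Context: $S_\Sigma[\gamma](x)=\int_\Sigma\gamma(T_\sigma(x))\mu_\Sigma(d\sigma)$; $S^\Sigma[P]$ is the probability measure with $E_{S^\Sigma[P]}[\gamma]=E_P[S_\Sigma[\gamma]]$ for $\gamma\in\mathcal{M}_b(X)$. $\Gamma^{\mathrm{inv}}_\Sigma=\{\gamma\in\Gamma:\gamma\circ T_\sigma=\gamma\ \forall\sigma\}$. $f:[0,\infty)\to\mathbb{R}$ convex, lower semicontinuous, $f(1)=0$, strictly convex at $1$, with Legendre transform $f^*$; $D_f^\Gamma(Q\|P)=\sup_{\gamma\in\Gamma}\{E_Q[\gamma]-\inf_{\nu\in\mathbb{R}}(\nu+E_P[f^*(\gamma-\nu)])\}$; $W^\Gamma(Q,P)=\sup_{\gamma\in\Gamma}\{E_Q[\gamma]-E_P[\gamma]\}$. *)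

theory Defs
  imports "HOL-Probability.Probability"
begin

text \<open>The group \<Sigma> is modelled as a type of class topological_group_add
  (additive notation, commutativity NOT assumed); compactness and the Hausdorff
  property are stated as explicit hypotheses / the class t2_space.\<close>

definition haar_probability :: "'g::{topological_group_add,t2_space} measure \<Rightarrow> bool" where
  "haar_probability \<mu> \<longleftrightarrow>
     sets \<mu> = sets borel \<and> prob_space \<mu> \<and>
     (\<forall>g. distr \<mu> \<mu> (\<lambda>s. g + s) = \<mu>) \<and>
     (\<forall>g. distr \<mu> \<mu> (\<lambda>s. s + g) = \<mu>) \<and>
     (\<forall>A\<in>sets borel. emeasure \<mu> A = (SUP K\<in>{K. compact K \<and> K \<subseteq> A}. emeasure \<mu> K))"

definition measurable_action :: "'a measure \<Rightarrow> ('g::{topological_group_add} \<Rightarrow> 'a \<Rightarrow> 'a) \<Rightarrow> bool" where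
  "measurable_action M T \<longleftrightarrow>
     (\<lambda>(s, x). T s x) \<in> measurable (borel \<Otimes>\<^sub>M M) M \<and>
     (\<forall>x\<in>space M. T 0 x = x) \<and>
     (\<forall>s t. \<forall>x\<in>space M. T (s + t) x = T s (T t x))"

definition bounded_measurable :: "'a measure \<Rightarrow> ('a \<Rightarrow> real) set" where
  "bounded_measurable M = {g \<in> borel_measurable M. \<exists>C. \<forall>x\<in>space M. \<bar>g x\<bar> \<le> C}"

definition sym_fun :: "'g measure \<Rightarrow> ('g \<Rightarrow> 'a \<Rightarrow> 'a) \<Rightarrow> ('a \<Rightarrow> real) \<Rightarrow> 'a \<Rightarrow> real" where
  "sym_fun \<mu> T g x = (\<integral>s. g (T s x) \<partial>\<mu>)"

definition sym_measure :: "'a measure \<Rightarrow> 'g measure \<Rightarrow> ('g \<Rightarrow> 'a \<Rightarrow> 'a) \<Rightarrow> 'a measure \<Rightarrow> 'a measure" where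
  "sym_measure M \<mu> T P = (THE R. prob_space R \<and> sets R = sets M \<and>
      (\<forall>g\<in>bounded_measurable M. (\<integral>x. g x \<partial>R) = (\<integral>x. sym_fun \<mu> T g x \<partial>P)))"

definition inv_part :: "'a measure \<Rightarrow> ('g \<Rightarrow> 'a \<Rightarrow> 'a) \<Rightarrow> ('a \<Rightarrow> real) set \<Rightarrow> ('a \<Rightarrow> real) set" where
  "inv_part M T \<Gamma> = {g \<in> \<Gamma>. \<forall>s. \<forall>x\<in>space M. g (T s x) = g x}"

definition legendre :: "(real \<Rightarrow> real) \<Rightarrow> real \<Rightarrow> ereal" where
  "legendre f y = (SUP x\<in>{0..}. ereal (x * y - f x))"

definition ereal_expect :: "'a measure \<Rightarrow> ('a \<Rightarrow> ereal) \<Rightarrow> ereal" where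
  "ereal_expect P h = enn2ereal (\<integral>\<^sup>+x. e2ennreal (h x) \<partial>P) - enn2ereal (\<integral>\<^sup>+x. e2ennreal (- h x) \<partial>P)"

definition f_gamma_div :: "(real \<Rightarrow> real) \<Rightarrow> ('a \<Rightarrow> real) set \<Rightarrow> 'a measure \<Rightarrow> 'a measure \<Rightarrow> ereal" where
  "f_gamma_div f \<Gamma> Q P = (SUP g\<in>\<Gamma>. ereal (\<integral>x. g x \<partial>Q)
      - (INF \<nu>\<in>(UNIV::real set). ereal \<nu> + ereal_expect P (\<lambda>x. legendre f (g x - \<nu>))))"

definition gamma_ipm :: "('a \<Rightarrow> real) set \<Rightarrow> 'a measure \<Rightarrow> 'a measure \<Rightarrow> ereal" where
  "gamma_ipm \<Gamma> Q P = (SUP g\<in>\<Gamma>. ereal ((\<integral>x. g x \<partial>Q) - (\<integral>x. g x \<partial>P)))"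

definition lsc_on_nonneg :: "(real \<Rightarrow> real) \<Rightarrow> bool" where
  "lsc_on_nonneg f \<longleftrightarrow> (\<forall>x\<ge>0. \<forall>e>0. \<forall>\<^sub>F y in at x within {0..}. f x - e < f y)"

definition strictly_convex_at_1 :: "(real \<Rightarrow> real) \<Rightarrow> bool" where
  "strictly_convex_at_1 f \<longleftrightarrow> (\<forall>x y t. 0 \<le> x \<and> x < 1 \<and> 1 < y \<and> 0 < t \<and> t < 1 \<and>
      t * x + (1 - t) * y = 1 \<longrightarrow> f 1 < t * f x + (1 - t) * f y)"

end

theory Submission
  imports Defs
begin



lemma legendre_ge: "0 \<le> t \<Longrightarrow> ereal (t * y - f t) \<le> legendre f y"
  unfolding legendre_def by (rule SUP_upper) auto

lemma legendre_lb: "ereal (- f 0) \<le> legendre f y"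
  using legendre_ge[of 0 y f] by simp

lemma legendre_mono: "y \<le> y' \<Longrightarrow> legendre f y \<le> legendre f y'"
  unfolding legendre_def
  by (rule SUP_mono) (auto intro!: bexI mult_left_mono)

lemma legendre_meas: "legendre f \<in> borel_measurable borel"
proof (rule borel_measurableI_greater)
  fix a
  have "is_interval {x. a < legendre f x}"
    unfolding is_interval_1 using legendre_mono
    by (metis (mono_tags, lifting) mem_Collect_eq order_less_le_trans)
  then show "{x \<in> space borel. a < legendre f x} \<in> sets borel"
    using real_interval_borel_measurable by simp
qed

lemma ereal_expect_shift:
  fixes h :: "'a \<Rightarrow> ereal"
  assumes P: "prob_space P" and h: "h \<in> borel_measurable P" and c: "0 \<le> c"
    and lb: "\<forall>x\<in>space P. - ereal c \<le> h x"
  shows "ereal_expect P h = enn2ereal (\<integral>\<^sup>+x. e2ennreal (h x + ereal c) \<partial>P) - ereal c"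
proof -
  interpret p: prob_space P by (rule P)
  define A where "A = (\<integral>\<^sup>+x. e2ennreal (h x + ereal c) \<partial>P)"
  define B where "B = (\<integral>\<^sup>+x. e2ennreal (- h x) \<partial>P)"
  define C where "C = (\<integral>\<^sup>+x. e2ennreal (h x) \<partial>P)"
  have pt: "e2ennreal (h x + ereal c) + e2ennreal (- h x) = e2ennreal (h x) + ennreal c"
    if x: "x \<in> space P" for x
  proof -
    have l: "- ereal c \<le> h x" using lb x by auto
    show ?thesis
    proof (cases "h x")
      case (real r)
      then have r: "- c \<le> r" using l by simp
      show ?thesis
      proof (cases "0 \<le> r")
        case True
        then show ?thesis using real c by (simp add: ennreal_neg)
      next
        case False
        have "ennreal (r + c) + ennreal (- r) = ennreal c"
          using ennreal_plus[of "r + c" "- r"] r False by simp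
        then show ?thesis using real c r False
          by (simp add: ennreal_neg)
      qed
    next
      case PInf then show ?thesis by simp
    next
      case MInf then show ?thesis using l by simp
    qed
  qed
  have "A + B = (\<integral>\<^sup>+x. e2ennreal (h x + ereal c) + e2ennreal (- h x) \<partial>P)"
    unfolding A_def B_def by (rule nn_integral_add[symmetric]) (use h in auto)
  also have "\<dots> = (\<integral>\<^sup>+x. e2ennreal (h x) + ennreal c \<partial>P)"
    by (rule nn_integral_cong) (simp add: pt)
  also have "\<dots> = C + ennreal c"
    unfolding C_def by (subst nn_integral_add) (use h in \<open>auto simp: p.emeasure_space_1\<close>)
  finally have ABC: "A + B = C + ennreal c" .
  have "B \<le> (\<integral>\<^sup>+x. ennreal c \<partial>P)"
    unfolding B_def
  proof (rule nn_integral_mono)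
    fix x assume "x \<in> space P"
    then have "- h x \<le> ereal c" using lb by (metis ereal_minus_le_minus ereal_uminus_uminus)
    then show "e2ennreal (- h x) \<le> ennreal c"
      by (metis e2ennreal_ereal e2ennreal_mono)
  qed
  also have "\<dots> = ennreal c" by (simp add: p.emeasure_space_1)
  finally have Bc: "B \<le> ennreal c" .
  obtain b where b: "B = ennreal b" "0 \<le> b"
    using Bc by (cases B rule: ennreal_cases) (auto simp: top_unique)
  have "ereal_expect P h = enn2ereal C - enn2ereal B"
    unfolding ereal_expect_def C_def B_def by simp
  also have "\<dots> = enn2ereal A - ereal c"
  proof (cases "C = top")
    case True
    then have "A = top" using ABC b by (auto simp: ennreal_add_eq_top)
    then show ?thesis using True b by simp
  next
    case False
    then obtain cc where cc: "C = ennreal cc" "0 \<le> cc" by (metis ennreal_cases)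
    have "ennreal cc + ennreal c \<noteq> top" by (simp add: ennreal_add_eq_top)
    moreover have "A = top \<Longrightarrow> ennreal cc + ennreal c = top" using ABC cc by simp
    ultimately have "A \<noteq> top" by blast
    then obtain a where a: "A = ennreal a" "0 \<le> a" by (cases A rule: ennreal_cases) auto
    have "ennreal (a + b) = ennreal (cc + c)" using ABC a b cc c by (simp add: ennreal_plus)
    then have "a + b = cc + c" using a b cc c by (subst (asm) ennreal_inj) auto
    then show ?thesis using a b cc by simp
  qed
  finally show ?thesis unfolding A_def .
qed


locale symm =
  fixes M :: "'a measure"
    and \<mu> :: "'g::{topological_group_add,t2_space} measure"
    and T :: "'g \<Rightarrow> 'a \<Rightarrow> 'a"
  assumes haar: "haar_probability \<mu>"
    and action: "measurable_action M T"
begin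

lemma mu_prob: "prob_space \<mu>" using haar unfolding haar_probability_def by auto
lemma sets_mu: "sets \<mu> = sets borel" using haar unfolding haar_probability_def by auto
lemma right_inv: "distr \<mu> \<mu> (\<lambda>s. s + g) = \<mu>" using haar unfolding haar_probability_def by auto
lemma Tmeas: "(\<lambda>(s, x). T s x) \<in> measurable (borel \<Otimes>\<^sub>M M) M"
  using action unfolding measurable_action_def by auto
lemma T_add: "x \<in> space M \<Longrightarrow> T (s + t) x = T s (T t x)"
  using action unfolding measurable_action_def by auto
lemma T_space: "x \<in> space M \<Longrightarrow> T s x \<in> space M"
  using measurable_space[OF Tmeas, of "(s,x)"] by (simp add: space_pair_measure)

lemma Tmeas_P: "sets P = sets M \<Longrightarrow> (\<lambda>(s, x). T s x) \<in> measurable (\<mu> \<Otimes>\<^sub>M P) M"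
  using Tmeas measurable_cong_sets[OF sets_pair_measure_cong[OF sets_mu, of P M] refl] by auto

lemma Tmeas_s: "x \<in> space M \<Longrightarrow> (\<lambda>s. T s x) \<in> measurable \<mu> M"
proof -
  assume x: "x \<in> space M"
  have "(\<lambda>s. (\<lambda>(s, x). T s x) (s, x)) \<in> measurable borel M"
    by (rule measurable_compose[OF measurable_Pair[OF measurable_ident_sets[OF refl] measurable_const[OF x]] Tmeas])
  moreover have eq: "measurable \<mu> M = measurable borel M" by (rule measurable_cong_sets[OF sets_mu refl])
  ultimately show ?thesis by simp
qed

definition SR :: "'a measure \<Rightarrow> 'a measure" where
  "SR P = distr (\<mu> \<Otimes>\<^sub>M P) M (\<lambda>(s, x). T s x)"

lemma SR_prob: "prob_space P \<Longrightarrow> sets P = sets M \<Longrightarrow> prob_space (SR P)"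
proof -
  assume P: "prob_space P" "sets P = sets M"
  interpret m: prob_space \<mu> by (rule mu_prob)
  interpret p: prob_space P by (rule P)
  interpret pp: pair_prob_space \<mu> P ..
  show ?thesis unfolding SR_def
    by (rule prob_space.prob_space_distr[OF pp.prob_space_axioms Tmeas_P[OF P(2)]])
qed

lemma sets_SR: "sets (SR P) = sets M" unfolding SR_def by simp

lemma bm_bounded: "g \<in> bounded_measurable M \<Longrightarrow> \<exists>C. \<forall>x\<in>space M. \<bar>g x\<bar> \<le> C"
  unfolding bounded_measurable_def by auto

lemma int_SR:
  assumes P: "prob_space P" "sets P = sets M" and g: "g \<in> bounded_measurable M"
  shows "(\<integral>x. g x \<partial>SR P) = (\<integral>x. sym_fun \<mu> T g x \<partial>P)"
proof -
  interpret m: prob_space \<mu> by (rule mu_prob)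
  interpret p: prob_space P by (rule P)
  interpret pp: pair_prob_space \<mu> P ..
  from g have gm: "g \<in> borel_measurable M" unfolding bounded_measurable_def by auto
  obtain C where C: "\<forall>x\<in>space M. \<bar>g x\<bar> \<le> C" using bm_bounded[OF g] by auto
  have Tm: "(\<lambda>(s, x). T s x) \<in> measurable (\<mu> \<Otimes>\<^sub>M P) M" by (rule Tmeas_P[OF P(2)])
  have gT: "(\<lambda>z. g (case z of (s, x) \<Rightarrow> T s x)) \<in> borel_measurable (\<mu> \<Otimes>\<^sub>M P)"
    using measurable_compose[OF Tm gm] by (simp add: comp_def)
  have int: "integrable (\<mu> \<Otimes>\<^sub>M P) (case_prod (\<lambda>s x. g (T s x)))"
  proof (rule pp.integrable_const_bound[where B=C])
    show "AE z in \<mu> \<Otimes>\<^sub>M P. norm (case_prod (\<lambda>s x. g (T s x)) z) \<le> C"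
      using C measurable_space[OF Tm] by (auto intro!: AE_I2 simp: split_beta)
    show "case_prod (\<lambda>s x. g (T s x)) \<in> borel_measurable (\<mu> \<Otimes>\<^sub>M P)"
      using gT by (simp add: split_beta')
  qed
  have "(\<integral>x. g x \<partial>SR P) = (\<integral>z. g (case z of (s, x) \<Rightarrow> T s x) \<partial>(\<mu> \<Otimes>\<^sub>M P))"
    unfolding SR_def by (rule integral_distr[OF Tm gm])
  also have "\<dots> = (\<integral>x. (\<integral>s. g (T s x) \<partial>\<mu>) \<partial>P)"
    using pp.integral_snd[OF int] by (simp add: split_beta')
  finally show ?thesis unfolding sym_fun_def .
qed

lemma sym_measure_eq:
  assumes P: "prob_space P" "sets P = sets M"
  shows "sym_measure M \<mu> T P = SR P"
  unfolding sym_measure_def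
proof (rule the_equality)
  show "prob_space (SR P) \<and> sets (SR P) = sets M \<and>
    (\<forall>g\<in>bounded_measurable M. (\<integral>x. g x \<partial>SR P) = (\<integral>x. sym_fun \<mu> T g x \<partial>P))"
    using SR_prob[OF P] sets_SR int_SR[OF P] by auto
next
  fix R assume R: "prob_space R \<and> sets R = sets M \<and>
    (\<forall>g\<in>bounded_measurable M. (\<integral>x. g x \<partial>R) = (\<integral>x. sym_fun \<mu> T g x \<partial>P))"
  interpret r: prob_space R using R by auto
  interpret s: prob_space "SR P" using SR_prob[OF P] .
  show "R = SR P"
  proof (rule measure_eqI)
    show "sets R = sets (SR P)" using R sets_SR by auto
    fix A assume A: "A \<in> sets R"
    have Am: "A \<in> sets M" using A R by auto
    have ib: "indicator A \<in> bounded_measurable M"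
      unfolding bounded_measurable_def using Am by (auto intro!: exI[of _ 1] simp: indicator_def)
    have e1: "(\<integral>x. indicator A x \<partial>R) = (\<integral>x. sym_fun \<mu> T (indicator A) x \<partial>P)"
      using R ib by auto
    have e2: "(\<integral>x. indicator A x \<partial>SR P) = (\<integral>x. sym_fun \<mu> T (indicator A) x \<partial>P)"
      using int_SR[OF P ib] by auto
    have "measure R A = measure (SR P) A"
      using e1 e2 Am sets_SR R by (simp add: r.emeasure_eq_measure s.emeasure_eq_measure)
    then show "emeasure R A = emeasure (SR P) A"
      by (simp add: r.emeasure_eq_measure s.emeasure_eq_measure)
  qed
qed


lemma sym_inv:
  assumes g: "g \<in> borel_measurable M" and x: "x \<in> space M"
  shows "sym_fun \<mu> T g (T s x) = sym_fun \<mu> T g x"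
proof -
  have pm: "(\<lambda>\<sigma>. \<sigma> + s) \<in> measurable \<mu> \<mu>"
  proof -
    have "(\<lambda>\<sigma>. \<sigma> + s) \<in> measurable borel borel"
      by (intro borel_measurable_continuous_onI continuous_intros)
    then show ?thesis using measurable_cong_sets[OF sets_mu sets_mu] by simp
  qed
  have gm: "(\<lambda>\<sigma>. g (T \<sigma> x)) \<in> borel_measurable \<mu>"
    using measurable_compose[OF Tmeas_s[OF x] g] by (simp add: comp_def)
  have "sym_fun \<mu> T g (T s x) = (\<integral>\<sigma>. g (T (\<sigma> + s) x) \<partial>\<mu>)"
    unfolding sym_fun_def using x by (simp add: T_add)
  also have "\<dots> = (\<integral>\<sigma>. g (T \<sigma> x) \<partial>distr \<mu> \<mu> (\<lambda>\<sigma>. \<sigma> + s))"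
    by (rule integral_distr[OF pm gm, symmetric])
  also have "\<dots> = sym_fun \<mu> T g x" unfolding right_inv sym_fun_def ..
  finally show ?thesis .
qed

lemma sym_const:
  assumes "\<forall>s. g (T s x) = g x"
  shows "sym_fun \<mu> T g x = g x"
proof -
  interpret m: prob_space \<mu> by (rule mu_prob)
  show ?thesis unfolding sym_fun_def using assms by (simp add: m.prob_space)
qed

lemma nn_SR:
  assumes P: "prob_space P" "sets P = sets M" and h: "h \<in> borel_measurable M"
  shows "(\<integral>\<^sup>+y. h y \<partial>SR P) = (\<integral>\<^sup>+x. (\<integral>\<^sup>+s. h (T s x) \<partial>\<mu>) \<partial>P)"
proof -
  interpret m: prob_space \<mu> by (rule mu_prob)
  interpret p: prob_space P by (rule P)
  interpret pp: pair_prob_space \<mu> P ..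
  have Tm: "(\<lambda>(s, x). T s x) \<in> measurable (\<mu> \<Otimes>\<^sub>M P) M" by (rule Tmeas_P[OF P(2)])
  have hT: "(\<lambda>z. h (case z of (s, x) \<Rightarrow> T s x)) \<in> borel_measurable (\<mu> \<Otimes>\<^sub>M P)"
    using measurable_compose[OF Tm h] by (simp add: comp_def)
  have "(\<integral>\<^sup>+y. h y \<partial>SR P) = (\<integral>\<^sup>+z. h (case z of (s, x) \<Rightarrow> T s x) \<partial>(\<mu> \<Otimes>\<^sub>M P))"
    unfolding SR_def by (rule nn_integral_distr[OF Tm]) (simp add: h)
  also have "\<dots> = (\<integral>\<^sup>+x. (\<integral>\<^sup>+s. h (T s x) \<partial>\<mu>) \<partial>P)"
    using pp.nn_integral_snd[OF hT] by simp
  finally show ?thesis .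
qed

lemma nn_SR_inv:
  assumes P: "prob_space P" "sets P = sets M" and h: "h \<in> borel_measurable M"
    and inv: "\<forall>s. \<forall>x\<in>space M. h (T s x) = h x"
  shows "(\<integral>\<^sup>+y. h y \<partial>SR P) = (\<integral>\<^sup>+x. h x \<partial>P)"
proof -
  interpret m: prob_space \<mu> by (rule mu_prob)
  have sp: "space P = space M" using P(2) by (rule sets_eq_imp_space_eq)
  show ?thesis unfolding nn_SR[OF P h]
    by (rule nn_integral_cong) (use inv sp in \<open>simp add: m.emeasure_space_1\<close>)
qed
end

context symm begin

lemma jensen_pt:
  assumes g: "g \<in> bounded_measurable M" and x: "x \<in> space M"
  shows "e2ennreal (legendre f (sym_fun \<mu> T g x - \<nu>) + ereal c)
     \<le> (\<integral>\<^sup>+s. e2ennreal (legendre f (g (T s x) - \<nu>) + ereal c) \<partial>\<mu>)"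
    (is "_ \<le> ?I")
proof -
  interpret m: prob_space \<mu> by (rule mu_prob)
  have gm: "g \<in> borel_measurable M" using g unfolding bounded_measurable_def by auto
  obtain C where C: "\<forall>x\<in>space M. \<bar>g x\<bar> \<le> C" using bm_bounded[OF g] by auto
  have gTm: "(\<lambda>s. g (T s x)) \<in> borel_measurable \<mu>"
    using measurable_compose[OF Tmeas_s[OF x] gm] by (simp add: comp_def)
  have ig: "integrable \<mu> (\<lambda>s. g (T s x))"
    by (rule m.integrable_const_bound[where B=C]) (use C T_space[OF x] gTm in auto)
  have key: "ereal (t * (sym_fun \<mu> T g x - \<nu>) - f t) + ereal c \<le> enn2ereal ?I" if t: "0 \<le> t" for t
  proof (cases "?I = top")
    case True then show ?thesis by simp
  next
    case False
    then obtain r where r: "?I = ennreal r" "0 \<le> r" by (cases ?I rule: ennreal_cases) auto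
    define \<phi> where "\<phi> s = t * g (T s x) + (c - f t - t * \<nu>)" for s
    have int\<phi>: "(\<integral>s. \<phi> s \<partial>\<mu>) = t * (sym_fun \<mu> T g x - \<nu>) - f t + c"
    proof -
      have "(\<integral>s. \<phi> s \<partial>\<mu>) = (\<integral>s. t * g (T s x) \<partial>\<mu>) + (\<integral>s. (c - f t - t * \<nu>) \<partial>\<mu>)"
        unfolding \<phi>_def by (rule Bochner_Integration.integral_add) (use ig in auto)
      then show ?thesis unfolding sym_fun_def by (simp add: m.prob_space algebra_simps)
    qed
    have "(\<integral>\<^sup>+s. ennreal (\<phi> s) \<partial>\<mu>) \<le> ?I"
    proof (rule nn_integral_mono)
      fix s
      have "ereal (\<phi> s) = ereal (t * (g (T s x) - \<nu>) - f t) + ereal c"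
        unfolding \<phi>_def by (simp add: algebra_simps)
      also have "\<dots> \<le> legendre f (g (T s x) - \<nu>) + ereal c"
        by (rule add_right_mono[OF legendre_ge[OF t]])
      finally show "ennreal (\<phi> s) \<le> e2ennreal (legendre f (g (T s x) - \<nu>) + ereal c)"
        by (metis e2ennreal_ereal e2ennreal_mono)
    qed
    then have "(\<integral>s. \<phi> s \<partial>\<mu>) \<le> r" using r by (intro integral_real_bounded) auto
    then show ?thesis using int\<phi> r by simp
  qed
  define I where "I = ?I"
  have "legendre f (sym_fun \<mu> T g x - \<nu>) \<le> enn2ereal I - ereal c"
    unfolding legendre_def
  proof (rule SUP_least)
    fix t :: real assume "t \<in> {0..}"
    then show "ereal (t * (sym_fun \<mu> T g x - \<nu>) - f t) \<le> enn2ereal I - ereal c"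
      using key[of t] unfolding I_def by (simp add: ereal_le_minus)
  qed
  then have "legendre f (sym_fun \<mu> T g x - \<nu>) + ereal c \<le> enn2ereal ?I" unfolding I_def
    by (simp add: ereal_le_minus[symmetric])
  then have "e2ennreal (legendre f (sym_fun \<mu> T g x - \<nu>) + ereal c) \<le> e2ennreal (enn2ereal ?I)"
    by (rule e2ennreal_mono)
  then show ?thesis by simp
qed


lemma legendre_comp_meas:
  assumes "g \<in> borel_measurable N"
  shows "(\<lambda>y. legendre f (g y - \<nu>)) \<in> borel_measurable N"
  using measurable_compose[OF borel_measurable_diff[OF assms measurable_const] legendre_meas]
  by (simp add: comp_def)

lemma legendre_lb_c: "- ereal \<bar>f 0\<bar> \<le> legendre f y"
  using legendre_lb[of f y] by (rule order_trans[rotated]) simp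

lemma jensen:
  assumes P: "prob_space P" "sets P = sets M" and g: "g \<in> bounded_measurable M"
    and h: "h \<in> bounded_measurable M" and hg: "\<forall>x\<in>space M. h x = sym_fun \<mu> T g x"
  shows "ereal_expect P (\<lambda>x. legendre f (h x - \<nu>)) \<le> ereal_expect (SR P) (\<lambda>y. legendre f (g y - \<nu>))"
proof -
  define c where "c = \<bar>f 0\<bar>"
  have c: "0 \<le> c" unfolding c_def by simp
  have sp: "space P = space M" using P(2) by (rule sets_eq_imp_space_eq)
  have gm: "g \<in> borel_measurable M" using g unfolding bounded_measurable_def by auto
  have hm: "h \<in> borel_measurable M" using h unfolding bounded_measurable_def by auto
  have gM: "(\<lambda>y. legendre f (g y - \<nu>)) \<in> borel_measurable M" by (rule legendre_comp_meas[OF gm])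
  have hP: "(\<lambda>y. legendre f (h y - \<nu>)) \<in> borel_measurable P"
    unfolding measurable_cong_sets[OF P(2) refl] by (rule legendre_comp_meas[OF hm])
  have gS: "(\<lambda>y. legendre f (g y - \<nu>)) \<in> borel_measurable (SR P)"
    unfolding measurable_cong_sets[OF sets_SR refl] by (rule gM)
  have gM': "(\<lambda>y. e2ennreal (legendre f (g y - \<nu>) + ereal c)) \<in> borel_measurable M"
    using gM by measurable
  have eP: "ereal_expect P (\<lambda>x. legendre f (h x - \<nu>))
     = enn2ereal (\<integral>\<^sup>+x. e2ennreal (legendre f (h x - \<nu>) + ereal c) \<partial>P) - ereal c"
    by (rule ereal_expect_shift[OF P(1) hP c]) (use legendre_lb_c c_def in auto)
  have eS: "ereal_expect (SR P) (\<lambda>x. legendre f (g x - \<nu>))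
     = enn2ereal (\<integral>\<^sup>+x. e2ennreal (legendre f (g x - \<nu>) + ereal c) \<partial>SR P) - ereal c"
    by (rule ereal_expect_shift[OF SR_prob[OF P] gS c]) (use legendre_lb_c c_def in auto)
  have "(\<integral>\<^sup>+x. e2ennreal (legendre f (h x - \<nu>) + ereal c) \<partial>P)
      \<le> (\<integral>\<^sup>+x. (\<integral>\<^sup>+s. e2ennreal (legendre f (g (T s x) - \<nu>) + ereal c) \<partial>\<mu>) \<partial>P)"
  proof (rule nn_integral_mono)
    fix x assume "x \<in> space P"
    then have x: "x \<in> space M" using sp by simp
    show "e2ennreal (legendre f (h x - \<nu>) + ereal c)
       \<le> (\<integral>\<^sup>+s. e2ennreal (legendre f (g (T s x) - \<nu>) + ereal c) \<partial>\<mu>)"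
      using jensen_pt[OF g x, of f \<nu> c] hg x by simp
  qed
  also have "\<dots> = (\<integral>\<^sup>+x. e2ennreal (legendre f (g x - \<nu>) + ereal c) \<partial>SR P)"
    by (rule nn_SR[OF P gM', symmetric])
  finally have le: "(\<integral>\<^sup>+x. e2ennreal (legendre f (h x - \<nu>) + ereal c) \<partial>P)
      \<le> (\<integral>\<^sup>+x. e2ennreal (legendre f (g x - \<nu>) + ereal c) \<partial>SR P)" .
  show ?thesis unfolding eP eS
    by (rule ereal_minus_mono) (use le in \<open>auto simp: less_eq_ennreal.rep_eq\<close>)
qed

lemma expect_inv:
  assumes P: "prob_space P" "sets P = sets M" and g: "g \<in> bounded_measurable M"
    and inv: "\<forall>s. \<forall>x\<in>space M. g (T s x) = g x"
  shows "ereal_expect (SR P) (\<lambda>y. legendre f (g y - \<nu>)) = ereal_expect P (\<lambda>x. legendre f (g x - \<nu>))"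
proof -
  define c where "c = \<bar>f 0\<bar>"
  have c: "0 \<le> c" unfolding c_def by simp
  have gm: "g \<in> borel_measurable M" using g unfolding bounded_measurable_def by auto
  have gM: "(\<lambda>y. legendre f (g y - \<nu>)) \<in> borel_measurable M" by (rule legendre_comp_meas[OF gm])
  have gP: "(\<lambda>y. legendre f (g y - \<nu>)) \<in> borel_measurable P"
    unfolding measurable_cong_sets[OF P(2) refl] by (rule gM)
  have gS: "(\<lambda>y. legendre f (g y - \<nu>)) \<in> borel_measurable (SR P)"
    unfolding measurable_cong_sets[OF sets_SR refl] by (rule gM)
  have gM': "(\<lambda>y. e2ennreal (legendre f (g y - \<nu>) + ereal c)) \<in> borel_measurable M"
    using gM by measurable
  have eP: "ereal_expect P (\<lambda>x. legendre f (g x - \<nu>))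
     = enn2ereal (\<integral>\<^sup>+x. e2ennreal (legendre f (g x - \<nu>) + ereal c) \<partial>P) - ereal c"
    by (rule ereal_expect_shift[OF P(1) gP c]) (use legendre_lb_c c_def in auto)
  have eS: "ereal_expect (SR P) (\<lambda>x. legendre f (g x - \<nu>))
     = enn2ereal (\<integral>\<^sup>+x. e2ennreal (legendre f (g x - \<nu>) + ereal c) \<partial>SR P) - ereal c"
    by (rule ereal_expect_shift[OF SR_prob[OF P] gS c]) (use legendre_lb_c c_def in auto)
  show ?thesis unfolding eP eS
    by (subst nn_SR_inv[OF P gM']) (use inv in auto)
qed

lemma int_inv:
  assumes P: "prob_space P" "sets P = sets M" and g: "g \<in> bounded_measurable M"
    and inv: "\<forall>s. \<forall>x\<in>space M. g (T s x) = g x"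
  shows "(\<integral>x. g x \<partial>SR P) = (\<integral>x. g x \<partial>P)"
proof -
  have sp: "space P = space M" using P(2) by (rule sets_eq_imp_space_eq)
  show ?thesis unfolding int_SR[OF P g]
    by (rule Bochner_Integration.integral_cong) (use inv sp sym_const in auto)
qed

lemma int_sym:
  assumes P: "prob_space P" "sets P = sets M" and g: "g \<in> bounded_measurable M"
    and hg: "\<forall>x\<in>space M. h x = sym_fun \<mu> T g x"
  shows "(\<integral>x. g x \<partial>SR P) = (\<integral>x. h x \<partial>P)"
proof -
  have sp: "space P = space M" using P(2) by (rule sets_eq_imp_space_eq)
  show ?thesis unfolding int_SR[OF P g]
    by (rule Bochner_Integration.integral_cong) (use hg sp in auto)
qed

lemma sym_in_inv:
  assumes g: "g \<in> bounded_measurable M"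
    and hg: "\<forall>x\<in>space M. h x = sym_fun \<mu> T g x"
  shows "\<forall>s. \<forall>x\<in>space M. h (T s x) = h x"
  using hg sym_inv[of g] g T_space unfolding bounded_measurable_def by auto
end

theorem theorem4:
  fixes M :: "'a measure"
    and \<mu> :: "'g::{topological_group_add,t2_space} measure"
    and T :: "'g \<Rightarrow> 'a \<Rightarrow> 'a"
    and \<Gamma> :: "('a \<Rightarrow> real) set"
    and f :: "real \<Rightarrow> real"
    and P Q :: "'a measure"
  assumes compact_group: "compact (UNIV :: 'g set)"
    and haar: "haar_probability \<mu>"
    and action: "measurable_action M T"
    and Gamma_sub: "\<Gamma> \<subseteq> bounded_measurable M"
    and Gamma_sym: "\<forall>g\<in>\<Gamma>. \<exists>h\<in>\<Gamma>. \<forall>x\<in>space M. h x = sym_fun \<mu> T g x"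
    and f_convex: "convex_on {0..} f"
    and f_lsc: "lsc_on_nonneg f"
    and f_1: "f 1 = 0"
    and f_strict: "strictly_convex_at_1 f"
    and P: "prob_space P" "sets P = sets M"
    and Q: "prob_space Q" "sets Q = sets M"
  shows "f_gamma_div f (inv_part M T \<Gamma>) Q P
           = f_gamma_div f \<Gamma> (sym_measure M \<mu> T Q) (sym_measure M \<mu> T P)
       \<and> gamma_ipm (inv_part M T \<Gamma>) Q P
           = gamma_ipm \<Gamma> (sym_measure M \<mu> T Q) (sym_measure M \<mu> T P)"
  proof -
  interpret symm M \<mu> T using haar action by unfold_locales
  have SQ: "sym_measure M \<mu> T Q = SR Q" by (rule sym_measure_eq[OF Q])
  have SP: "sym_measure M \<mu> T P = SR P" by (rule sym_measure_eq[OF P])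
  have Gi: "g \<in> \<Gamma> \<and> g \<in> bounded_measurable M \<and> (\<forall>s. \<forall>x\<in>space M. g (T s x) = g x)"
    if "g \<in> inv_part M T \<Gamma>" for g
    using that Gamma_sub unfolding inv_part_def by auto
  have Gs: "\<exists>h\<in>inv_part M T \<Gamma>. h \<in> bounded_measurable M \<and> (\<forall>x\<in>space M. h x = sym_fun \<mu> T g x)"
    if g: "g \<in> \<Gamma>" for g
  proof -
    obtain h where h: "h \<in> \<Gamma>" "\<forall>x\<in>space M. h x = sym_fun \<mu> T g x" using Gamma_sym g by blast
    have gb: "g \<in> bounded_measurable M" using g Gamma_sub by auto
    have "h \<in> inv_part M T \<Gamma>" unfolding inv_part_def using h sym_in_inv[OF gb h(2)] by auto
    then show ?thesis using h Gamma_sub by auto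
  qed
  have D: "f_gamma_div f (inv_part M T \<Gamma>) Q P = f_gamma_div f \<Gamma> (SR Q) (SR P)"
    unfolding f_gamma_div_def
  proof (rule antisym)
    show "(SUP g\<in>inv_part M T \<Gamma>. ereal (\<integral>x. g x \<partial>Q)
          - (INF \<nu>\<in>UNIV. ereal \<nu> + ereal_expect P (\<lambda>x. legendre f (g x - \<nu>))))
        \<le> (SUP g\<in>\<Gamma>. ereal (\<integral>x. g x \<partial>SR Q)
          - (INF \<nu>\<in>UNIV. ereal \<nu> + ereal_expect (SR P) (\<lambda>x. legendre f (g x - \<nu>))))"
    proof (rule SUP_least)
      fix g assume g: "g \<in> inv_part M T \<Gamma>"
      note gg = Gi[OF g]
      have "ereal (\<integral>x. g x \<partial>Q) - (INF \<nu>\<in>UNIV. ereal \<nu> + ereal_expect P (\<lambda>x. legendre f (g x - \<nu>)))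
          = ereal (\<integral>x. g x \<partial>SR Q) - (INF \<nu>\<in>UNIV. ereal \<nu> + ereal_expect (SR P) (\<lambda>x. legendre f (g x - \<nu>)))"
        using int_inv[OF Q _ ] expect_inv[OF P] gg by simp
      then show "ereal (\<integral>x. g x \<partial>Q) - (INF \<nu>\<in>UNIV. ereal \<nu> + ereal_expect P (\<lambda>x. legendre f (g x - \<nu>)))
          \<le> (SUP g\<in>\<Gamma>. ereal (\<integral>x. g x \<partial>SR Q)
          - (INF \<nu>\<in>UNIV. ereal \<nu> + ereal_expect (SR P) (\<lambda>x. legendre f (g x - \<nu>))))"
        using gg by (auto intro!: SUP_upper2[of g])
    qed
  next
    show "(SUP g\<in>\<Gamma>. ereal (\<integral>x. g x \<partial>SR Q)
          - (INF \<nu>\<in>UNIV. ereal \<nu> + ereal_expect (SR P) (\<lambda>x. legendre f (g x - \<nu>))))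
        \<le> (SUP g\<in>inv_part M T \<Gamma>. ereal (\<integral>x. g x \<partial>Q)
          - (INF \<nu>\<in>UNIV. ereal \<nu> + ereal_expect P (\<lambda>x. legendre f (g x - \<nu>))))"
    proof (rule SUP_least)
      fix g assume g: "g \<in> \<Gamma>"
      have gb: "g \<in> bounded_measurable M" using g Gamma_sub by auto
      obtain h where h: "h \<in> inv_part M T \<Gamma>" "h \<in> bounded_measurable M"
        "\<forall>x\<in>space M. h x = sym_fun \<mu> T g x" using Gs[OF g] by blast
      have i1: "(\<integral>x. g x \<partial>SR Q) = (\<integral>x. h x \<partial>Q)" by (rule int_sym[OF Q gb h(3)])
      have i2: "(INF \<nu>\<in>UNIV. ereal \<nu> + ereal_expect P (\<lambda>x. legendre f (h x - \<nu>)))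
          \<le> (INF \<nu>\<in>UNIV. ereal \<nu> + ereal_expect (SR P) (\<lambda>x. legendre f (g x - \<nu>)))"
        by (rule INF_mono) (auto intro!: add_left_mono jensen[OF P gb h(2) h(3)])
      have "ereal (\<integral>x. g x \<partial>SR Q) - (INF \<nu>\<in>UNIV. ereal \<nu> + ereal_expect (SR P) (\<lambda>x. legendre f (g x - \<nu>)))
          \<le> ereal (\<integral>x. h x \<partial>Q) - (INF \<nu>\<in>UNIV. ereal \<nu> + ereal_expect P (\<lambda>x. legendre f (h x - \<nu>)))"
        unfolding i1 by (rule ereal_minus_mono[OF order_refl i2])
      then show "ereal (\<integral>x. g x \<partial>SR Q) - (INF \<nu>\<in>UNIV. ereal \<nu> + ereal_expect (SR P) (\<lambda>x. legendre f (g x - \<nu>)))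
          \<le> (SUP g\<in>inv_part M T \<Gamma>. ereal (\<integral>x. g x \<partial>Q)
          - (INF \<nu>\<in>UNIV. ereal \<nu> + ereal_expect P (\<lambda>x. legendre f (g x - \<nu>))))"
        using h(1) by (auto intro: SUP_upper2[of h])
    qed
  qed
  have W: "gamma_ipm (inv_part M T \<Gamma>) Q P = gamma_ipm \<Gamma> (SR Q) (SR P)"
    unfolding gamma_ipm_def
  proof (rule antisym)
    show "(SUP g\<in>inv_part M T \<Gamma>. ereal ((\<integral>x. g x \<partial>Q) - (\<integral>x. g x \<partial>P)))
        \<le> (SUP g\<in>\<Gamma>. ereal ((\<integral>x. g x \<partial>SR Q) - (\<integral>x. g x \<partial>SR P)))"
    proof (rule SUP_least)
      fix g assume g: "g \<in> inv_part M T \<Gamma>"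
      note gg = Gi[OF g]
      have "(\<integral>x. g x \<partial>Q) - (\<integral>x. g x \<partial>P) = (\<integral>x. g x \<partial>SR Q) - (\<integral>x. g x \<partial>SR P)"
        using int_inv[OF Q] int_inv[OF P] gg by simp
      then show "ereal ((\<integral>x. g x \<partial>Q) - (\<integral>x. g x \<partial>P))
          \<le> (SUP g\<in>\<Gamma>. ereal ((\<integral>x. g x \<partial>SR Q) - (\<integral>x. g x \<partial>SR P)))"
        using gg by (auto intro!: SUP_upper2[of g])
    qed
  next
    show "(SUP g\<in>\<Gamma>. ereal ((\<integral>x. g x \<partial>SR Q) - (\<integral>x. g x \<partial>SR P)))
        \<le> (SUP g\<in>inv_part M T \<Gamma>. ereal ((\<integral>x. g x \<partial>Q) - (\<integral>x. g x \<partial>P)))"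
    proof (rule SUP_least)
      fix g assume g: "g \<in> \<Gamma>"
      have gb: "g \<in> bounded_measurable M" using g Gamma_sub by auto
      obtain h where h: "h \<in> inv_part M T \<Gamma>" "h \<in> bounded_measurable M"
        "\<forall>x\<in>space M. h x = sym_fun \<mu> T g x" using Gs[OF g] by blast
      have "(\<integral>x. g x \<partial>SR Q) - (\<integral>x. g x \<partial>SR P) = (\<integral>x. h x \<partial>Q) - (\<integral>x. h x \<partial>P)"
        using int_sym[OF Q gb h(3)] int_sym[OF P gb h(3)] by simp
      then show "ereal ((\<integral>x. g x \<partial>SR Q) - (\<integral>x. g x \<partial>SR P))
          \<le> (SUP g\<in>inv_part M T \<Gamma>. ereal ((\<integral>x. g x \<partial>Q) - (\<integral>x. g x \<partial>P)))"
        using h(1) by (auto intro: SUP_upper2[of h])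
    qed
  qed
  show ?thesis unfolding SQ SP using D W by simp
qed

end
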